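(* Let $a<b$ be real numbers and let $h:[a,b)\to\mathbb{R}$ be an increasing function such that $$C:=\overline{\lim_{x\to a}}\operatorname{ess}\frac{h(x)-h(a)}{(x-a)\,h'(x)}<\infty.$$ Then for every $q\in(0,1)$, $$\varlimsup_{x\to a}\frac{h(a+q(x-a))-h(a)}{h(x)-h(a)}\ \leq\ q^{1/C}.$$
   Context: An increasing function is differentiable almost everywhere, so $h'(x)$ is defined for almost all $x$. For a function $f:[a,b)\to\mathbb{R}$ (defined almost everywhere), the essential upper limit $\overline{\lim_{x\to a}}\operatorname{ess} f(x)$ is the greatest lower bound of the numbers $t\in\mathbb{R}$ such that $f(x)\le t$ for almost all $x$ in some interval $[a,\delta]\subset[a,b)$. Limits at $a$ are right-hand limits. *)

theory Defs
  imports "HOL-Analysis.Analysis"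
begin

text \<open>Essential upper limit at a (from the right) of a function defined on [a,b):
  the greatest lower bound of the real numbers t such that f x \<le> t for almost
  all x in some interval [a,\<delta>] contained in [a,b).  Valued in the extended reals
  (the infimum of the empty set is \<infinity>).\<close>
definition ess_limsup_at_right :: "real \<Rightarrow> real \<Rightarrow> (real \<Rightarrow> ereal) \<Rightarrow> ereal" where
  "ess_limsup_at_right a b f =
     Inf (ereal ` {t. \<exists>\<delta>. a < \<delta> \<and> \<delta> < b \<and>
                     (AE x in lborel. x \<in> {a..\<delta>} \<longrightarrow> f x \<le> ereal t)})"

text \<open>A positive
  numerator over a zero derivative gives +\<infinity>; 0/0 is read as 0 (Isabelle's
  division convention, matching the ratio in the conclusion).\<close>
definition growth_quot :: "(real \<Rightarrow> real) \<Rightarrow> real \<Rightarrow> real \<Rightarrow> ereal" where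
  "growth_quot h a x =
     (if deriv h x = 0 \<and> h x \<noteq> h a then \<infinity>
      else ereal ((h x - h a) / ((x - a) * deriv h x)))"

text \<open>q^(1/C) for C \<in> [0,\<infinity>), with q^(1/0) = q^\<infinity> = 0 for q \<in> (0,1).\<close>
definition pow_inv :: "real \<Rightarrow> ereal \<Rightarrow> ereal" where
  "pow_inv q C = (if C = 0 then 0 else ereal (q powr (1 / real_of_ereal C)))"

end

theory Submission
  imports Defs
begin
lemma sum_incr_disjoint:
  fixes f :: "real \<Rightarrow> real" and F :: "(real \<times> real) set"
  assumes mf: "mono f" and "finite F" and "\<forall>i\<in>F. A \<le> fst i \<and> fst i < snd i \<and> snd i \<le> B"
   and "pairwise (\<lambda>i j. disjnt {fst i..snd i} {fst j..snd j}) F" and "A \<le> B"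
  shows "(\<Sum>i\<in>F. f (snd i) - f (fst i)) \<le> f B - f A"
  using assms(2-5)
proof (induction "card F" arbitrary: F B rule: less_induct)
  case less
  show ?case
  proof (cases "F = {}")
    case True
    then show ?thesis using mf less.prems by (simp add: mono_def)
  next
    case False
    define m where "m = Max (fst ` F)"
    have "m \<in> fst ` F" unfolding m_def using False less.prems by (intro Max_in) auto
    then obtain i0 where i0: "i0 \<in> F" "fst i0 = m" by auto
    have mx: "fst j \<le> m" if "j \<in> F" for j unfolding m_def using that less.prems by auto
    have lt: "snd j \<le> m" if "j \<in> F - {i0}" for j
    proof (rule ccontr)
      assume "\<not> snd j \<le> m"
      then have "m \<in> {fst j..snd j}" "m \<in> {fst i0..snd i0}" using mx[of j] that i0 less.prems(2) by auto
      moreover have "disjnt {fst j..snd j} {fst i0..snd i0}"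
        using less.prems(3) that i0(1) by (auto simp: pairwise_def)
      ultimately show False by (auto simp: disjnt_def)
    qed
    have "card (F - {i0}) < card F" using i0 less.prems(1) by (meson card_Diff1_less)
    moreover have "\<forall>i\<in>F - {i0}. A \<le> fst i \<and> fst i < snd i \<and> snd i \<le> m" using lt less.prems(2) by auto
    moreover have "pairwise (\<lambda>i j. disjnt {fst i..snd i} {fst j..snd j}) (F - {i0})"
      using less.prems(3) by (meson Diff_subset pairwise_subset)
    moreover have "A \<le> m" using less.prems(2) i0 by auto
    ultimately have IH: "(\<Sum>i\<in>F - {i0}. f (snd i) - f (fst i)) \<le> f m - f A"
      using less.hyps less.prems(1) by blast
    have eq: "(\<Sum>i\<in>F. f (snd i) - f (fst i)) = (f (snd i0) - f (fst i0)) + (\<Sum>i\<in>F - {i0}. f (snd i) - f (fst i))"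
      using i0(1) less.prems(1) by (simp add: sum.remove)
    have "f (snd i0) \<le> f B" using i0 less.prems(2) mf by (auto simp: mono_def)
    moreover have "f (fst i0) = f m" using i0 by simp
    ultimately show ?thesis using IH eq by linarith
  qed
qed

lemma cball_pair: "fst i \<le> snd i \<Longrightarrow> cball ((fst i + snd i)/2) ((snd i - fst i)/2) = {fst i..snd i}"
  by (simp add: cball_eq_atLeastAtMost field_simps)

lemma core:
  fixes f :: "real \<Rightarrow> real" and P :: "(real \<times> real) set"
  assumes mf: "mono f" and q: "q > 0"
   and Pdisj: "pairwise (\<lambda>i j. disjnt {fst i..snd i} {fst j..snd j}) P"
   and SP: "\<forall>x\<in>S. \<exists>i\<in>P. fst i < x \<and> x < snd i"
   and big: "\<forall>x\<in>S. \<forall>e>0. \<exists>\<alpha> \<beta>. \<alpha> \<le> x \<and> x \<le> \<beta> \<and> \<alpha> < \<beta> \<and> \<beta> - \<alpha> < e \<and> f \<beta> - f \<alpha> > q*(\<beta>-\<alpha>)"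
   and B: "\<And>F. F \<subseteq> P \<Longrightarrow> finite F \<Longrightarrow> (\<Sum>i\<in>F. f (snd i) - f (fst i)) \<le> B"
  obtains T where "S \<subseteq> T" "T \<in> lmeasurable" "measure lebesgue T \<le> B/q"
proof -
  define K where "K = {i. fst i < snd i \<and> (\<exists>j\<in>P. fst j < fst i \<and> snd i < snd j) \<and> f (snd i) - f (fst i) > q*(snd i - fst i)}"
  define c where "c i = (fst i + snd i)/2" for i :: "real \<times> real"
  define r where "r i = (snd i - fst i)/2" for i :: "real \<times> real"
  have cb: "cball (c i) (r i) = {fst i..snd i}" if "i \<in> K" for i
    using that unfolding K_def c_def r_def by (intro cball_pair) auto
  obtain C where C: "countable C" "C \<subseteq> K"
     and Cdisj: "pairwise (\<lambda>i j. disjnt (cball (c i) (r i)) (cball (c j) (r j))) C"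
     and Cneg: "negligible (S - (\<Union>i\<in>C. cball (c i) (r i)))"
  proof (rule Vitali_covering_theorem_cballs[of K r S c])
    show "0 < r i" if "i \<in> K" for i using that unfolding K_def r_def by auto
    fix x d :: real assume x: "x \<in> S" and d: "0 < d"
    obtain j where j: "j \<in> P" "fst j < x" "x < snd j" using SP x by blast
    define e where "e = min d (min (x - fst j) (snd j - x))"
    have e: "e > 0" using d j unfolding e_def by auto
    obtain \<alpha> \<beta> where ab: "\<alpha> \<le> x" "x \<le> \<beta>" "\<alpha> < \<beta>" "\<beta> - \<alpha> < e" "f \<beta> - f \<alpha> > q*(\<beta>-\<alpha>)"
      using big x e by blast
    have "(\<alpha>,\<beta>) \<in> K" unfolding K_def using ab j e_def by (auto intro!: bexI[of _ j])
    moreover have "x \<in> cball (c (\<alpha>,\<beta>)) (r (\<alpha>,\<beta>))" using cb[OF calculation] ab by auto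
    moreover have "r (\<alpha>,\<beta>) < d" using ab e_def unfolding r_def by auto
    ultimately show "\<exists>i. i \<in> K \<and> x \<in> cball (c i) (r i) \<and> r i < d" by blast
  qed
  have Cdisj': "pairwise (\<lambda>i j. disjnt {fst i..snd i} {fst j..snd j}) C"
  proof (unfold pairwise_def, intro ballI impI)
    fix i j assume ij: "i \<in> C" "j \<in> C" "i \<noteq> j"
    then have iK: "i \<in> K" and jK: "j \<in> K" using C(2) by auto
    have "disjnt (cball (c i) (r i)) (cball (c j) (r j))" using Cdisj ij unfolding pairwise_def by blast
    then show "disjnt {fst i..snd i} {fst j..snd j}" by (simp add: cb[OF iK] cb[OF jK])
  qed
  define par where "par i = (SOME j. j \<in> P \<and> fst j < fst i \<and> snd i < snd j)" for i :: "real \<times> real"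
  have par: "par i \<in> P \<and> fst (par i) < fst i \<and> snd i < snd (par i)" if "i \<in> K" for i
    using that unfolding K_def par_def by (metis (mono_tags, lifting) mem_Collect_eq someI_ex)
  have sumB: "(\<Sum>i\<in>I. f (snd i) - f (fst i)) \<le> B" if I: "I \<subseteq> C" "finite I" for I
  proof -
    have "(\<Sum>i\<in>I. f (snd i) - f (fst i)) = (\<Sum>g\<in>par ` I. \<Sum>i\<in>{i\<in>I. par i = g}. f (snd i) - f (fst i))"
      using I(2) by (rule sum.image_gen)
    also have "\<dots> \<le> (\<Sum>g\<in>par ` I. f (snd g) - f (fst g))"
    proof (rule sum_mono)
      fix g assume "g \<in> par ` I"
      show "(\<Sum>i\<in>{i\<in>I. par i = g}. f (snd i) - f (fst i)) \<le> f (snd g) - f (fst g)"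
      proof (rule sum_incr_disjoint[OF mf])
        show "finite {i\<in>I. par i = g}" using I by auto
        show "\<forall>i\<in>{i\<in>I. par i = g}. fst g \<le> fst i \<and> fst i < snd i \<and> snd i \<le> snd g"
        proof
          fix i assume "i \<in> {i\<in>I. par i = g}"
          then have iK: "i \<in> K" and pg: "par i = g" using I C(2) by auto
          have "fst i < snd i" using iK by (simp add: K_def)
          then show "fst g \<le> fst i \<and> fst i < snd i \<and> snd i \<le> snd g" using par[OF iK] pg by auto
        qed
        show "pairwise (\<lambda>i j. disjnt {fst i..snd i} {fst j..snd j}) {i\<in>I. par i = g}"
          by (rule pairwise_subset[OF Cdisj']) (use I in auto)
        show "fst g \<le> snd g" proof -
          obtain i where i: "i \<in> I" "g = par i" using \<open>g \<in> par ` I\<close> by auto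
          then have iK: "i \<in> K" using I C(2) by auto
          have "fst i < snd i" using iK by (simp add: K_def)
          then show ?thesis using par[OF iK] i by auto
        qed
      qed
    qed
    also have "\<dots> \<le> B" using I par C(2) by (intro B) auto
    finally show ?thesis .
  qed
  have mUB: "measure lebesgue (\<Union>i\<in>I. cball (c i) (r i)) \<le> B/q" if I: "I \<subseteq> C" "finite I" for I
  proof -
    have "measure lebesgue (\<Union>i\<in>I. cball (c i) (r i)) \<le> (\<Sum>i\<in>I. measure lebesgue (cball (c i) (r i)))"
      using I by (intro measure_UNION_le) auto
    also have "\<dots> = (\<Sum>i\<in>I. snd i - fst i)"
    proof (rule sum.cong[OF refl])
      fix i assume "i \<in> I"
      then have iK: "i \<in> K" using I C(2) by auto
      then have "fst i < snd i" by (simp add: K_def)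
      then show "measure lebesgue (cball (c i) (r i)) = snd i - fst i" using cb[OF iK] by simp
    qed
    also have "\<dots> \<le> (\<Sum>i\<in>I. (f (snd i) - f (fst i)) / q)"
      using I C(2) q by (intro sum_mono) (auto simp: K_def field_simps)
    also have "\<dots> = (\<Sum>i\<in>I. f (snd i) - f (fst i)) / q" by (simp add: sum_divide_distrib)
    also have "\<dots> \<le> B / q" using sumB[OF I] q by (simp add: divide_right_mono)
    finally show ?thesis .
  qed
  have U1: "(\<Union>i\<in>C. cball (c i) (r i)) \<in> lmeasurable"
    by (rule fmeasurable_UN_bound[OF C(1) _ mUB]) auto
  have U2: "measure lebesgue (\<Union>i\<in>C. cball (c i) (r i)) \<le> B/q"
    by (rule measure_UN_bound[OF C(1) _ mUB]) auto
  define T where "T = (\<Union>i\<in>C. cball (c i) (r i)) \<union> (S - (\<Union>i\<in>C. cball (c i) (r i)))"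
  have "T \<in> lmeasurable" unfolding T_def using U1 Cneg negligible_imp_measurable fmeasurable.Un by blast
  moreover have "measure lebesgue T = measure lebesgue (\<Union>i\<in>C. cball (c i) (r i))"
    unfolding T_def using U1 Cneg by (intro measure_Un_null_set) (auto simp: negligible_iff_null_sets)
  moreover have "S \<subseteq> T" unfolding T_def by auto
  ultimately show ?thesis using that U2 by auto
qed

lemma negligible_countable: "countable (A::real set) \<Longrightarrow> negligible A"
proof -
  assume "countable A"
  moreover have "A = \<Union>((\<lambda>x. {x}) ` A)" by auto
  moreover have "negligible (\<Union>((\<lambda>x. {x}) ` A))"
  proof (rule negligible_countable_Union)
    show "countable ((\<lambda>x. {x}) ` A)" using \<open>countable A\<close> by (rule countable_image)
    show "negligible S" if "S \<in> (\<lambda>x. {x}) ` A" for S using that by (auto intro: negligible_finite)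
  qed
  ultimately show ?thesis by simp
qed

lemma gen_step:
  fixes f :: "real \<Rightarrow> real"
  assumes mf: "mono f" and p: "0 < p" and pq: "p < q"
   and small: "\<forall>x\<in>E. \<forall>e>0. \<exists>\<alpha> \<beta>. \<alpha> \<le> x \<and> x \<le> \<beta> \<and> \<alpha> < \<beta> \<and> \<beta> - \<alpha> < e \<and> f \<beta> - f \<alpha> < p*(\<beta>-\<alpha>)"
   and big: "\<forall>x\<in>E. \<forall>e>0. \<exists>\<alpha> \<beta>. \<alpha> \<le> x \<and> x \<le> \<beta> \<and> \<alpha> < \<beta> \<and> \<beta> - \<alpha> < e \<and> f \<beta> - f \<alpha> > q*(\<beta>-\<alpha>)"
   and T: "E \<subseteq> T" "T \<in> lmeasurable" and eps: "\<epsilon> > 0"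
  shows "\<exists>T'. E \<subseteq> T' \<and> T' \<in> lmeasurable \<and> measure lebesgue T' \<le> (p/q) * (measure lebesgue T + \<epsilon>)"
proof -
  have q: "q > 0" using p pq by auto
  obtain U where U: "open U" "T \<subseteq> U" "(U - T) \<in> lmeasurable" "emeasure lebesgue (U - T) < ennreal \<epsilon>"
    using sets_lebesgue_outer_open[of T \<epsilon>] T eps by blast
  have Ueq: "U = T \<union> (U - T)" using U by auto
  have Ul: "U \<in> lmeasurable" using U T by (subst Ueq) (intro fmeasurable.Un)
  have "measure lebesgue (U - T) < \<epsilon>"
    using U(3,4) eps by (simp add: emeasure_eq_measure2 ennreal_less_iff)
  moreover have "measure lebesgue U \<le> measure lebesgue T + measure lebesgue (U - T)"
    using U T by (subst Ueq) (intro measure_Un_le; auto)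
  ultimately have mU: "measure lebesgue U \<le> measure lebesgue T + \<epsilon>" by linarith
  define K where "K = {i. fst i < snd i \<and> {fst i..snd i} \<subseteq> U \<and> f (snd i) - f (fst i) < p*(snd i - fst i)}"
  define c where "c i = (fst i + snd i)/2" for i :: "real \<times> real"
  define r where "r i = (snd i - fst i)/2" for i :: "real \<times> real"
  have cb: "cball (c i) (r i) = {fst i..snd i}" if "i \<in> K" for i
    using that unfolding K_def c_def r_def by (intro cball_pair) auto
  obtain C where C: "countable C" "C \<subseteq> K"
     and Cdisj: "pairwise (\<lambda>i j. disjnt (cball (c i) (r i)) (cball (c j) (r j))) C"
     and Cneg: "negligible (E - (\<Union>i\<in>C. cball (c i) (r i)))"
  proof (rule Vitali_covering_theorem_cballs[of K r E c])
    show "0 < r i" if "i \<in> K" for i using that unfolding K_def r_def by auto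
    fix x d :: real assume x: "x \<in> E" and d: "0 < d"
    have "x \<in> U" using x T U by auto
    then obtain \<rho> where \<rho>: "\<rho> > 0" "ball x \<rho> \<subseteq> U" using U(1) open_contains_ball by blast
    define e where "e = min d \<rho>"
    have e: "e > 0" using d \<rho> unfolding e_def by auto
    obtain \<alpha> \<beta> where ab: "\<alpha> \<le> x" "x \<le> \<beta>" "\<alpha> < \<beta>" "\<beta> - \<alpha> < e" "f \<beta> - f \<alpha> < p*(\<beta>-\<alpha>)"
      using small x e by blast
    have "{\<alpha>..\<beta>} \<subseteq> ball x \<rho>" using ab e_def by (auto simp: dist_real_def)
    then have "(\<alpha>,\<beta>) \<in> K" unfolding K_def using ab \<rho> by auto
    moreover have "x \<in> cball (c (\<alpha>,\<beta>)) (r (\<alpha>,\<beta>))" using cb[OF calculation] ab by auto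
    moreover have "r (\<alpha>,\<beta>) < d" using ab e_def unfolding r_def by auto
    ultimately show "\<exists>i. i \<in> K \<and> x \<in> cball (c i) (r i) \<and> r i < d" by blast
  qed
  have Cdisj': "pairwise (\<lambda>i j. disjnt {fst i..snd i} {fst j..snd j}) C"
  proof (unfold pairwise_def, intro ballI impI)
    fix i j assume ij: "i \<in> C" "j \<in> C" "i \<noteq> j"
    then have iK: "i \<in> K" and jK: "j \<in> K" using C(2) by auto
    have "disjnt (cball (c i) (r i)) (cball (c j) (r j))" using Cdisj ij unfolding pairwise_def by blast
    then show "disjnt {fst i..snd i} {fst j..snd j}" by (simp add: cb[OF iK] cb[OF jK])
  qed
  define Ep where "Ep = fst ` C \<union> snd ` C"
  have Epn: "negligible Ep" unfolding Ep_def using C(1) by (intro negligible_countable) auto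
  define N where "N = Ep \<union> (E - (\<Union>i\<in>C. cball (c i) (r i)))"
  have Nn: "negligible N" unfolding N_def using Epn Cneg by (rule negligible_Un)
  define S where "S = E - N"
  have SP: "\<forall>x\<in>S. \<exists>i\<in>C. fst i < x \<and> x < snd i"
  proof
    fix x assume "x \<in> S"
    then obtain i where i: "i \<in> C" "x \<in> cball (c i) (r i)" "x \<notin> Ep" unfolding S_def N_def by auto
    then have "i \<in> K" using C(2) by auto
    then have "x \<in> {fst i..snd i}" using cb[of i] i(2) by simp
    moreover have "x \<noteq> fst i" "x \<noteq> snd i" using i unfolding Ep_def by auto
    ultimately show "\<exists>i\<in>C. fst i < x \<and> x < snd i" using i by (intro bexI[of _ i]) auto
  qed
  have sumB: "(\<Sum>i\<in>F. f (snd i) - f (fst i)) \<le> p * measure lebesgue U" if F: "F \<subseteq> C" "finite F" for F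
  proof -
    have FK: "i \<in> K" if "i \<in> F" for i using that F C(2) by auto
    have "(\<Sum>i\<in>F. f (snd i) - f (fst i)) \<le> (\<Sum>i\<in>F. p * (snd i - fst i))"
      using FK by (intro sum_mono) (auto simp: K_def less_imp_le)
    also have "\<dots> = p * (\<Sum>i\<in>F. measure lebesgue {fst i..snd i})"
      using FK by (simp add: sum_distrib_left K_def less_imp_le)
    also have "(\<Sum>i\<in>F. measure lebesgue {fst i..snd i}) = measure lebesgue (\<Union>i\<in>F. {fst i..snd i})"
    proof (rule measure_negligible_finite_Union_image[symmetric])
      show "finite F" by fact
      show "{fst i..snd i} \<in> lmeasurable" for i :: "real \<times> real" by (rule lmeasurable_interval(1))
      show "pairwise (\<lambda>i j. negligible ({fst i..snd i} \<inter> {fst j..snd j})) F"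
        using pairwise_subset[OF Cdisj' F(1)] by (simp add: pairwise_def disjnt_def)
    qed
    also have "measure lebesgue (\<Union>i\<in>F. {fst i..snd i}) \<le> measure lebesgue U"
      using FK Ul F(2) by (intro measure_mono_fmeasurable) (auto simp: K_def)
    finally show ?thesis using p by (simp add: mult_left_mono)
  qed
  have bigS: "\<forall>x\<in>S. \<forall>e>0. \<exists>\<alpha> \<beta>. \<alpha> \<le> x \<and> x \<le> \<beta> \<and> \<alpha> < \<beta> \<and> \<beta> - \<alpha> < e \<and> f \<beta> - f \<alpha> > q*(\<beta>-\<alpha>)"
    using big unfolding S_def by auto
  obtain T2 where T2: "S \<subseteq> T2" "T2 \<in> lmeasurable" "measure lebesgue T2 \<le> (p * measure lebesgue U)/q"
    using core[OF mf q Cdisj' SP bigS sumB] by blast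
  define T' where "T' = T2 \<union> N"
  have "E \<subseteq> T'" using T2(1) unfolding T'_def S_def by auto
  moreover have "T' \<in> lmeasurable" unfolding T'_def using T2 Nn negligible_imp_measurable fmeasurable.Un by blast
  moreover have "measure lebesgue T' = measure lebesgue T2"
    unfolding T'_def using T2 Nn by (intro measure_Un_null_set) (auto simp: negligible_iff_null_sets)
  moreover have "(p * measure lebesgue U)/q \<le> (p/q) * (measure lebesgue T + \<epsilon>)"
    using mU p q by (simp add: divide_right_mono mult_left_mono)
  ultimately show ?thesis using T2 by (intro exI[of _ T']) auto
qed

definition smallI :: "(real \<Rightarrow> real) \<Rightarrow> real \<Rightarrow> real \<Rightarrow> bool" where
  "smallI f p x \<longleftrightarrow> (\<forall>e>0. \<exists>\<alpha> \<beta>. \<alpha> \<le> x \<and> x \<le> \<beta> \<and> \<alpha> < \<beta> \<and> \<beta> - \<alpha> < e \<and> f \<beta> - f \<alpha> < p*(\<beta>-\<alpha>))"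
definition bigI :: "(real \<Rightarrow> real) \<Rightarrow> real \<Rightarrow> real \<Rightarrow> bool" where
  "bigI f q x \<longleftrightarrow> (\<forall>e>0. \<exists>\<alpha> \<beta>. \<alpha> \<le> x \<and> x \<le> \<beta> \<and> \<alpha> < \<beta> \<and> \<beta> - \<alpha> < e \<and> f \<beta> - f \<alpha> > q*(\<beta>-\<alpha>))"

lemma gen:
  fixes f :: "real \<Rightarrow> real"
  assumes mf: "mono f" and p: "0 < p" and pq: "p < q" and bE: "bounded E"
   and sm: "\<forall>x\<in>E. smallI f p x" and bg: "\<forall>x\<in>E. bigI f q x"
  shows "negligible E"
proof -
  have q: "q > 0" using p pq by auto
  define \<T> where "\<T> = {T. E \<subseteq> T \<and> T \<in> lmeasurable}"
  define M where "M = Inf (measure lebesgue ` \<T>)"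
  obtain x0 R where R: "E \<subseteq> cball x0 R" using bounded_subset_cball bE by blast
  have "cball x0 R \<in> \<T>" unfolding \<T>_def using R by auto
  then have ne: "measure lebesgue ` \<T> \<noteq> {}" by blast
  have bdd: "bdd_below (measure lebesgue ` \<T>)" by (rule bdd_belowI[of _ 0]) auto
  have M0: "0 \<le> M" unfolding M_def by (rule cInf_greatest[OF ne]) auto
  have S1: "\<forall>x\<in>E. \<forall>e>0. \<exists>\<alpha> \<beta>. \<alpha> \<le> x \<and> x \<le> \<beta> \<and> \<alpha> < \<beta> \<and> \<beta> - \<alpha> < e \<and> f \<beta> - f \<alpha> < p * (\<beta> - \<alpha>)"
    using sm unfolding smallI_def by blast
  have S2: "\<forall>x\<in>E. \<forall>e>0. \<exists>\<alpha> \<beta>. \<alpha> \<le> x \<and> x \<le> \<beta> \<and> \<alpha> < \<beta> \<and> \<beta> - \<alpha> < e \<and> q * (\<beta> - \<alpha>) < f \<beta> - f \<alpha>"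
    using bg unfolding bigI_def by blast
  have key: "M * (q/p) - \<epsilon> \<le> M" if "\<epsilon> > 0" for \<epsilon>
  proof -
    have "M * (q/p) - \<epsilon> \<le> m" if "m \<in> measure lebesgue ` \<T>" for m
    proof -
      obtain T where T: "T \<in> \<T>" "m = measure lebesgue T" using \<open>m \<in> _\<close> by blast
      have TT: "E \<subseteq> T" "T \<in> lmeasurable" using T(1) unfolding \<T>_def by auto
      have "\<exists>T'. E \<subseteq> T' \<and> T' \<in> lmeasurable \<and> measure lebesgue T' \<le> (p/q) * (measure lebesgue T + \<epsilon>)"
        by (rule gen_step[OF mf p pq S1 S2 TT \<open>\<epsilon> > 0\<close>])
      then obtain T' where T': "E \<subseteq> T'" "T' \<in> lmeasurable" "measure lebesgue T' \<le> (p/q) * (measure lebesgue T + \<epsilon>)"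
        by blast
      have "T' \<in> \<T>" unfolding \<T>_def using T' by blast
      then have "measure lebesgue T' \<in> measure lebesgue ` \<T>" by (rule imageI)
      then have "Inf (measure lebesgue ` \<T>) \<le> measure lebesgue T'" by (rule cInf_lower[OF _ bdd])
      then have "M \<le> measure lebesgue T'" unfolding M_def .
      then have "M \<le> (p/q) * (m + \<epsilon>)" unfolding T(2) using T'(3) by linarith
      then have "M * (q/p) \<le> m + \<epsilon>" using p q by (simp add: field_simps)
      then show ?thesis by linarith
    qed
    then have "M * (q/p) - \<epsilon> \<le> Inf (measure lebesgue ` \<T>)" by (intro cInf_greatest[OF ne])
    then show ?thesis by (simp add: M_def)
  qed
  have "M * (q/p) \<le> M"
  proof (rule field_le_epsilon)
    fix e :: real assume "e > 0" then show "M * (q/p) \<le> M + e" using key[of e] by linarith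
  qed
  then have "M * (q/p - 1) \<le> 0" by (simp add: right_diff_distrib)
  moreover have "1 < q/p" using p pq by simp
  ultimately have "M \<le> 0" by (simp add: mult_le_0_iff)
  then have "M = 0" using M0 by simp
  show ?thesis unfolding negligible_outer
  proof (intro allI impI)
    fix e :: real assume "e > 0"
    then have "Inf (measure lebesgue ` \<T>) < e" using \<open>M = 0\<close> unfolding M_def by simp
    then obtain m where "m \<in> measure lebesgue ` \<T>" "m < e" using cInf_lessD[OF ne] by blast
    then show "\<exists>T. E \<subseteq> T \<and> T \<in> lmeasurable \<and> measure lebesgue T < e" unfolding \<T>_def by auto
  qed
qed

lemma infl:
  fixes f :: "real \<Rightarrow> real"
  assumes mf: "mono f" and cd: "c < d" and Ecd: "E \<subseteq> {c<..<d}"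
   and bg: "\<forall>x\<in>E. \<forall>n::nat. n > 0 \<longrightarrow> bigI f (real n) x"
  shows "negligible E"
  unfolding negligible_outer_le
proof (intro allI impI)
  fix e :: real assume e: "e > 0"
  define n where "n = nat \<lceil>(f d - f c)/e\<rceil> + 1"
  have n: "n > 0" unfolding n_def by simp
  have "(f d - f c)/e \<le> real n" unfolding n_def by linarith
  then have ne: "(f d - f c)/real n \<le> e" using e n by (simp add: field_simps)
  have fcd: "f c \<le> f d" using mf cd by (simp add: mono_def)
  have SP: "\<forall>x\<in>E. \<exists>i\<in>{(c,d)}. fst i < x \<and> x < snd i" using Ecd by auto
  have B: "(\<Sum>i\<in>F. f (snd i) - f (fst i)) \<le> f d - f c" if "F \<subseteq> {(c,d)}" "finite F" for F
  proof -
    have "F = {} \<or> F = {(c,d)}" using that by (simp add: subset_singleton_iff)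
    then show ?thesis using fcd by auto
  qed
  obtain T where "E \<subseteq> T" "T \<in> lmeasurable" "measure lebesgue T \<le> (f d - f c)/real n"
  proof (rule core[OF mf _ _ SP _ B])
    show "0 < real n" using n by simp
    show "pairwise (\<lambda>i j. disjnt {fst i..snd i} {fst j..snd j}) {(c, d)}" by simp
    show "\<forall>x\<in>E. \<forall>e>0. \<exists>\<alpha> \<beta>. \<alpha> \<le> x \<and> x \<le> \<beta> \<and> \<alpha> < \<beta> \<and> \<beta> - \<alpha> < e \<and> real n * (\<beta> - \<alpha>) < f \<beta> - f \<alpha>"
      using bg n unfolding bigI_def by blast
  qed
  then show "\<exists>T. E \<subseteq> T \<and> T \<in> lmeasurable \<and> measure lebesgue T \<le> e" using ne by auto
qed

lemma good_diff:
  fixes f :: "real \<Rightarrow> real"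
  assumes mf: "mono f"
   and nb: "\<forall>p q. p \<in> \<rat> \<longrightarrow> q \<in> \<rat> \<longrightarrow> 0 < p \<longrightarrow> p < q \<longrightarrow> \<not> (smallI f p x \<and> bigI f q x)"
   and n: "\<not> bigI f n x"
  shows "\<exists>D. (f has_real_derivative D) (at x)"
proof -
  obtain e0 where e0: "e0 > 0" and e0b: "\<And>\<alpha> \<beta>. \<alpha> \<le> x \<Longrightarrow> x \<le> \<beta> \<Longrightarrow> \<alpha> < \<beta> \<Longrightarrow> \<beta> - \<alpha> < e0 \<Longrightarrow> f \<beta> - f \<alpha> \<le> n*(\<beta>-\<alpha>)"
  proof -
    obtain e where e: "e > 0" "\<forall>\<alpha> \<beta>. \<not> (\<alpha> \<le> x \<and> x \<le> \<beta> \<and> \<alpha> < \<beta> \<and> \<beta> - \<alpha> < e \<and> f \<beta> - f \<alpha> > n*(\<beta>-\<alpha>))"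
      using n unfolding bigI_def by blast
    show ?thesis by (rule that[OF e(1)]) (use e(2) in \<open>force simp: not_less\<close>)
  qed
  define Qs where "Qs e = {(f \<beta> - f \<alpha>)/(\<beta>-\<alpha>) | \<alpha> \<beta>. \<alpha> \<le> x \<and> x \<le> \<beta> \<and> \<alpha> < \<beta> \<and> \<beta> - \<alpha> < e}" for e
  define Sm where "Sm e = Sup (Qs e)" for e
  define D where "D = Inf (Sm ` {0<..e0})"
  have Qnn: "0 \<le> (f \<beta> - f \<alpha>)/(\<beta>-\<alpha>)" if "\<alpha> < \<beta>" for \<alpha> \<beta>
    using that mf by (simp add: mono_def)
  have Qne: "(f (x + e/2) - f x)/((x+e/2) - x) \<in> Qs e" if "e > 0" for e
    unfolding Qs_def using that by (intro CollectI exI[of _ x] exI[of _ "x+e/2"]) auto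
  have Qbdd: "bdd_above (Qs e)" if "e \<le> e0" for e
  proof (rule bdd_aboveI[of _ n])
    fix y assume "y \<in> Qs e"
    then obtain \<alpha> \<beta> where ab: "y = (f \<beta> - f \<alpha>)/(\<beta>-\<alpha>)" "\<alpha> \<le> x" "x \<le> \<beta>" "\<alpha> < \<beta>" "\<beta> - \<alpha> < e"
      unfolding Qs_def by blast
    have "f \<beta> - f \<alpha> \<le> n*(\<beta>-\<alpha>)" using e0b ab that by auto
    then show "y \<le> n" using ab by (simp add: pos_divide_le_eq)
  qed
  have Qle: "(f \<beta> - f \<alpha>)/(\<beta>-\<alpha>) \<le> Sm e" if "e \<le> e0" "\<alpha> \<le> x" "x \<le> \<beta>" "\<alpha> < \<beta>" "\<beta> - \<alpha> < e" for e \<alpha> \<beta>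
    unfolding Sm_def
  proof (rule cSup_upper[OF _ Qbdd[OF that(1)]])
    show "(f \<beta> - f \<alpha>)/(\<beta>-\<alpha>) \<in> Qs e" unfolding Qs_def using that by blast
  qed
  have Sm0: "0 \<le> Sm e" if "0 < e" "e \<le> e0" for e
  proof -
    have "0 \<le> (f (x + e/2) - f x)/((x+e/2) - x)" using Qnn[of x "x+e/2"] that by linarith
    also have "\<dots> \<le> Sm e" unfolding Sm_def by (rule cSup_upper[OF Qne[OF that(1)] Qbdd[OF that(2)]])
    finally show ?thesis .
  qed
  have Dne: "Sm ` {0<..e0} \<noteq> {}" using e0 by auto
  have Dbdd: "bdd_below (Sm ` {0<..e0})" by (rule bdd_belowI[of _ 0]) (use Sm0 in auto)
  have Dle: "D \<le> Sm e" if "0 < e" "e \<le> e0" for e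
    unfolding D_def by (rule cInf_lower[OF _ Dbdd]) (use that in auto)
  have A: "\<exists>\<delta>>0. \<forall>\<alpha> \<beta>. \<alpha> \<le> x \<longrightarrow> x \<le> \<beta> \<longrightarrow> \<alpha> < \<beta> \<longrightarrow> \<beta> - \<alpha> < \<delta> \<longrightarrow> (f \<beta> - f \<alpha>)/(\<beta>-\<alpha>) < D + \<eta>" if "\<eta> > 0" for \<eta>
  proof -
    have "Inf (Sm ` {0<..e0}) < D + \<eta>" using that unfolding D_def by simp
    then obtain s where "s \<in> Sm ` {0<..e0}" "s < D + \<eta>" using cInf_lessD[OF Dne] by blast
    then obtain e where e: "0 < e" "e \<le> e0" "Sm e < D + \<eta>" by auto
    show ?thesis
    proof (intro exI[of _ e] conjI allI impI)
      show "0 < e" by fact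
      fix \<alpha> \<beta> assume "\<alpha> \<le> x" "x \<le> \<beta>" "\<alpha> < \<beta>" "\<beta> - \<alpha> < e"
      then have "(f \<beta> - f \<alpha>)/(\<beta>-\<alpha>) \<le> Sm e" using Qle e by blast
      then show "(f \<beta> - f \<alpha>)/(\<beta>-\<alpha>) < D + \<eta>" using e by linarith
    qed
  qed
  have B: "\<exists>\<delta>>0. \<forall>\<alpha> \<beta>. \<alpha> \<le> x \<longrightarrow> x \<le> \<beta> \<longrightarrow> \<alpha> < \<beta> \<longrightarrow> \<beta> - \<alpha> < \<delta> \<longrightarrow> D - \<eta> < (f \<beta> - f \<alpha>)/(\<beta>-\<alpha>)" if eta: "\<eta> > 0" for \<eta>
  proof (rule ccontr)
    assume neg: "\<not> ?thesis"
    have C: "\<And>\<delta>. \<delta> > 0 \<Longrightarrow> \<exists>\<alpha> \<beta>. \<alpha> \<le> x \<and> x \<le> \<beta> \<and> \<alpha> < \<beta> \<and> \<beta> - \<alpha> < \<delta> \<and> (f \<beta> - f \<alpha>)/(\<beta>-\<alpha>) \<le> D - \<eta>"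
    proof -
      fix \<delta> :: real assume "\<delta> > 0"
      then show "\<exists>\<alpha> \<beta>. \<alpha> \<le> x \<and> x \<le> \<beta> \<and> \<alpha> < \<beta> \<and> \<beta> - \<alpha> < \<delta> \<and> (f \<beta> - f \<alpha>)/(\<beta>-\<alpha>) \<le> D - \<eta>"
        using neg by (meson not_le)
    qed
    obtain \<alpha>0 \<beta>0 where "\<alpha>0 < \<beta>0" "(f \<beta>0 - f \<alpha>0)/(\<beta>0-\<alpha>0) \<le> D - \<eta>" using C[of 1] by auto
    then have D\<eta>: "0 \<le> D - \<eta>" using Qnn[of \<alpha>0 \<beta>0] by linarith
    obtain p where p: "p \<in> \<rat>" "D - \<eta> < p" "p < D - \<eta>/2" using Rats_dense_in_real[of "D - \<eta>" "D - \<eta>/2"] eta by auto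
    obtain q where q: "q \<in> \<rat>" "D - \<eta>/2 < q" "q < D" using Rats_dense_in_real[of "D - \<eta>/2" D] eta by auto
    have "smallI f p x" unfolding smallI_def
    proof (intro allI impI)
      fix e :: real assume "e > 0"
      then obtain \<alpha> \<beta> where ab: "\<alpha> \<le> x" "x \<le> \<beta>" "\<alpha> < \<beta>" "\<beta> - \<alpha> < e" "(f \<beta> - f \<alpha>)/(\<beta>-\<alpha>) \<le> D - \<eta>"
        using C by blast
      then have "(f \<beta> - f \<alpha>)/(\<beta>-\<alpha>) < p" using p by linarith
      then have "f \<beta> - f \<alpha> < p*(\<beta>-\<alpha>)" using ab by (simp add: pos_divide_less_eq)
      then show "\<exists>\<alpha> \<beta>. \<alpha> \<le> x \<and> x \<le> \<beta> \<and> \<alpha> < \<beta> \<and> \<beta> - \<alpha> < e \<and> f \<beta> - f \<alpha> < p*(\<beta>-\<alpha>)" using ab by blast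
    qed
    moreover have "bigI f q x" unfolding bigI_def
    proof (intro allI impI)
      fix e :: real assume "e > 0"
      define e' where "e' = min e e0"
      have e': "0 < e'" "e' \<le> e0" "e' \<le> e" using \<open>e > 0\<close> e0 unfolding e'_def by auto
      have "q < Sup (Qs e')" using Dle[OF e'(1,2)] q unfolding Sm_def by linarith
      then obtain y where "y \<in> Qs e'" "q < y"
        using less_cSup_iff[of "Qs e'" q] Qne[OF e'(1)] Qbdd[OF e'(2)] by blast
      then obtain \<alpha> \<beta> where ab: "\<alpha> \<le> x" "x \<le> \<beta>" "\<alpha> < \<beta>" "\<beta> - \<alpha> < e'" "q < (f \<beta> - f \<alpha>)/(\<beta>-\<alpha>)"
        unfolding Qs_def by blast
      then have "q*(\<beta>-\<alpha>) < f \<beta> - f \<alpha>" by (simp add: pos_less_divide_eq)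
      then show "\<exists>\<alpha> \<beta>. \<alpha> \<le> x \<and> x \<le> \<beta> \<and> \<alpha> < \<beta> \<and> \<beta> - \<alpha> < e \<and> q*(\<beta>-\<alpha>) < f \<beta> - f \<alpha>"
        using ab e' by (intro exI[of _ \<alpha>] exI[of _ \<beta>]) auto
    qed
    moreover have "0 < p" using p D\<eta> by linarith
    moreover have "p < q" using p q by linarith
    ultimately show False using nb p(1) q(1) by blast
  qed
  have "(f has_real_derivative D) (at x)"
    unfolding has_field_derivative_iff tendsto_iff
  proof (intro allI impI)
    fix \<eta> :: real assume "\<eta> > 0"
    obtain \<delta>1 where d1: "\<delta>1 > 0" "\<And>\<alpha> \<beta>. \<alpha> \<le> x \<Longrightarrow> x \<le> \<beta> \<Longrightarrow> \<alpha> < \<beta> \<Longrightarrow> \<beta> - \<alpha> < \<delta>1 \<Longrightarrow> (f \<beta> - f \<alpha>)/(\<beta>-\<alpha>) < D + \<eta>"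
      using A[OF \<open>\<eta> > 0\<close>] by blast
    obtain \<delta>2 where d2: "\<delta>2 > 0" "\<And>\<alpha> \<beta>. \<alpha> \<le> x \<Longrightarrow> x \<le> \<beta> \<Longrightarrow> \<alpha> < \<beta> \<Longrightarrow> \<beta> - \<alpha> < \<delta>2 \<Longrightarrow> D - \<eta> < (f \<beta> - f \<alpha>)/(\<beta>-\<alpha>)"
      using B[OF \<open>\<eta> > 0\<close>] by blast
    show "\<forall>\<^sub>F y in at x. dist ((f y - f x) / (y - x)) D < \<eta>"
      unfolding eventually_at
    proof (intro exI[of _ "min \<delta>1 \<delta>2"] conjI ballI impI)
      show "0 < min \<delta>1 \<delta>2" using d1 d2 by simp
      fix y assume y: "y \<in> UNIV" "y \<noteq> x \<and> dist y x < min \<delta>1 \<delta>2"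
      show "dist ((f y - f x) / (y - x)) D < \<eta>"
      proof (cases "x < y")
        case True
        have l: "y - x < \<delta>1" "y - x < \<delta>2" using y True by (auto simp: dist_real_def)
        have "(f y - f x)/(y-x) < D + \<eta>" by (rule d1(2)) (use True l in auto)
        moreover have "D - \<eta> < (f y - f x)/(y-x)" by (rule d2(2)) (use True l in auto)
        ultimately show ?thesis unfolding dist_real_def by linarith
      next
        case False
        then have xy: "y < x" using y by auto
        have l: "x - y < \<delta>1" "x - y < \<delta>2" using y xy by (auto simp: dist_real_def)
        have "(f x - f y)/(x-y) < D + \<eta>" by (rule d1(2)) (use xy l in auto)
        moreover have "D - \<eta> < (f x - f y)/(x-y)" by (rule d2(2)) (use xy l in auto)
        moreover have "(f x - f y)/(x-y) = (f y - f x)/(y-x)"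
          by (metis minus_diff_eq minus_divide_divide)
        ultimately show ?thesis unfolding dist_real_def by (simp add: abs_less_iff)
      qed
    qed
  qed
  then show ?thesis by blast
qed

lemma mono_ae_diff_interval:
  fixes f :: "real \<Rightarrow> real"
  assumes mf: "mono f" and cd: "c < d"
  shows "negligible {x\<in>{c<..<d}. \<not> (\<exists>D. (f has_real_derivative D) (at x))}"
proof -
  define PQ :: "(real \<times> real) set" where "PQ = {pq \<in> \<rat> \<times> \<rat>. 0 < fst pq \<and> fst pq < snd pq}"
  define Bad where "Bad pq = {x\<in>{c<..<d}. smallI f (fst pq) x \<and> bigI f (snd pq) x}" for pq
  define I where "I = {x\<in>{c<..<d}. \<forall>n::nat. n > 0 \<longrightarrow> bigI f (real n) x}"
  have cPQ: "countable PQ" unfolding PQ_def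
    by (rule countable_subset[OF _ countable_SIGMA[OF countable_rat countable_rat]]) auto
  have nBad: "negligible (\<Union>(Bad ` PQ))"
  proof (rule negligible_countable_Union)
    show "countable (Bad ` PQ)" using cPQ by (rule countable_image)
    fix S assume "S \<in> Bad ` PQ"
    then obtain pq where pq: "pq \<in> PQ" "S = Bad pq" by auto
    show "negligible S" unfolding pq(2)
    proof (rule gen[OF mf])
      show "0 < fst pq" "fst pq < snd pq" using pq(1) unfolding PQ_def by auto
      show "bounded (Bad pq)" unfolding Bad_def by (rule bounded_subset[of "{c..d}"]) auto
      show "\<forall>x\<in>Bad pq. smallI f (fst pq) x" "\<forall>x\<in>Bad pq. bigI f (snd pq) x" unfolding Bad_def by auto
    qed
  qed
  have nI: "negligible I" unfolding I_def by (rule infl[OF mf cd]) auto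
  have "{x\<in>{c<..<d}. \<not> (\<exists>D. (f has_real_derivative D) (at x))} \<subseteq> \<Union>(Bad ` PQ) \<union> I"
  proof
    fix x assume x: "x \<in> {x\<in>{c<..<d}. \<not> (\<exists>D. (f has_real_derivative D) (at x))}"
    show "x \<in> \<Union>(Bad ` PQ) \<union> I"
    proof (rule ccontr)
      assume nx: "x \<notin> \<Union>(Bad ` PQ) \<union> I"
      have "\<exists>D. (f has_real_derivative D) (at x)"
      proof -
        obtain n :: nat where "n > 0" "\<not> bigI f (real n) x" using nx x unfolding I_def by auto
        moreover have "\<forall>p q. p \<in> \<rat> \<longrightarrow> q \<in> \<rat> \<longrightarrow> 0 < p \<longrightarrow> p < q \<longrightarrow> \<not> (smallI f p x \<and> bigI f q x)"
        proof (intro allI impI)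
          fix p q :: real assume "p \<in> \<rat>" "q \<in> \<rat>" "0 < p" "p < q"
          then have "(p,q) \<in> PQ" unfolding PQ_def by auto
          then have "x \<notin> Bad (p,q)" using nx by auto
          then show "\<not> (smallI f p x \<and> bigI f q x)" using x unfolding Bad_def by auto
        qed
        ultimately show ?thesis using good_diff[OF mf] by blast
      qed
      then show False using x by auto
    qed
  qed
  moreover have "negligible (\<Union>(Bad ` PQ) \<union> I)" using nBad nI by (rule negligible_Un)
  ultimately show ?thesis by (rule negligible_subset[rotated])
qed

lemma mono_on_ae_diff:
  fixes h :: "real \<Rightarrow> real"
  assumes mh: "mono_on {a..<b} h" and ab: "a < b"
  shows "negligible {x\<in>{a<..<b}. \<not> (\<exists>D. (h has_real_derivative D) (at x))}"
proof -
  define c where "c n = a + (b-a)/(real n + 3)" for n :: nat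
  define d where "d n = b - (b-a)/(real n + 3)" for n :: nat
  define f where "f n x = h (max (c n) (min (d n) x))" for n x
  have cd: "a < c n" "c n < d n" "d n < b" for n
  proof -
    have p: "0 < (b-a)/(real n + 3)" using ab by simp
    define t where "t = (b-a)/(real n + 3)"
    have "t < (b-a)/2" unfolding t_def using ab by (intro divide_strict_left_mono) auto
    then have "2*t < b - a" by (simp add: field_simps)
    then show "c n < d n" unfolding c_def d_def t_def[symmetric] by linarith
    show "a < c n" "d n < b" unfolding c_def d_def using p by linarith+
  qed
  have mf: "mono (f n)" for n
  proof (rule monoI)
    fix x y :: real assume "x \<le> y"
    then show "f n x \<le> f n y" unfolding f_def using cd[of n]
      by (intro mono_onD[OF mh]) (auto simp: max_def min_def)
  qed
  have sub: "{x\<in>{a<..<b}. \<not> (\<exists>D. (h has_real_derivative D) (at x))} \<subseteq>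
     (\<Union>n. {x\<in>{c n<..<d n}. \<not> (\<exists>D. (f n has_real_derivative D) (at x))})"
  proof
    fix x assume x: "x \<in> {x\<in>{a<..<b}. \<not> (\<exists>D. (h has_real_derivative D) (at x))}"
    define m where "m = min (x - a) (b - x)"
    have m: "m > 0" using x unfolding m_def by auto
    obtain n :: nat where n: "(b-a)/m < real n" using reals_Archimedean2 by blast
    have "(b-a)/(real n + 3) < m"
    proof -
      have "b - a < real n * m" using n m by (simp add: pos_divide_less_eq)
      also have "\<dots> \<le> (real n + 3) * m" using m by (simp add: mult_right_mono)
      finally show ?thesis by (simp add: pos_divide_less_eq mult.commute)
    qed
    then have xn: "x \<in> {c n<..<d n}" unfolding c_def d_def m_def by auto
    have "\<not> (\<exists>D. (f n has_real_derivative D) (at x))"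
    proof
      assume "\<exists>D. (f n has_real_derivative D) (at x)"
      then obtain D where D: "(f n has_real_derivative D) (at x)" by blast
      have "(h has_real_derivative D) (at x)"
        by (rule has_field_derivative_transform_within_open[OF D, of "{c n<..<d n}"])
           (use xn in \<open>auto simp: f_def\<close>)
      then show False using x by blast
    qed
    then show "x \<in> (\<Union>n. {x\<in>{c n<..<d n}. \<not> (\<exists>D. (f n has_real_derivative D) (at x))})" using xn by blast
  qed
  have "negligible (\<Union>n. {x\<in>{c n<..<d n}. \<not> (\<exists>D. (f n has_real_derivative D) (at x))})"
    by (rule negligible_Union_nat) (rule mono_ae_diff_interval[OF mf cd(2)])
  then show ?thesis using sub by (rule negligible_subset)
qed

lemma RI:
  fixes \<psi> :: "real \<Rightarrow> real"
  assumes yx: "y < x" and M: "M \<ge> 0"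
   and lip: "\<And>s s'. y \<le> s \<Longrightarrow> s < s' \<Longrightarrow> s' \<le> x \<Longrightarrow> \<psi> s' - \<psi> s \<ge> -M*(s'-s)"
   and N: "negligible N"
   and der: "\<And>s. s \<in> {y..<x} \<Longrightarrow> s \<notin> N \<Longrightarrow> \<exists>D\<ge>0. (\<psi> has_real_derivative D) (at s)"
  shows "\<psi> y \<le> \<psi> x"
proof -
  have main: "\<psi> y - \<epsilon> * (x - y) - M * \<epsilon> \<le> \<psi> x" if eps: "\<epsilon> > 0" for \<epsilon>
  proof -
    obtain U where U: "open U" "N \<subseteq> U" "(U - N) \<in> lmeasurable" "emeasure lebesgue (U - N) < ennreal \<epsilon>"
      using sets_lebesgue_outer_open[of N \<epsilon>] N eps negligible_imp_sets by blast
    have Ueq: "U = N \<union> (U - N)" using U by auto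
    have Ul: "U \<in> lmeasurable" using U N negligible_imp_measurable by (subst Ueq) (intro fmeasurable.Un)
    have "measure lebesgue (U - N) < \<epsilon>"
      using U(3,4) eps by (simp add: emeasure_eq_measure2 ennreal_less_iff)
    moreover have "measure lebesgue U = measure lebesgue (U - N)"
      using U N by (subst Ueq, subst Un_commute, intro measure_Un_null_set) (auto simp: negligible_iff_null_sets)
    ultimately have mU: "measure lebesgue U < \<epsilon>" by linarith
    define \<mu> where "\<mu> s = measure lebesgue (U \<inter> {y..s})" for s
    have \<mu>l: "U \<inter> {y..s} \<in> lmeasurable" for s by (rule fmeasurable_Int_fmeasurable[OF Ul]) auto
    have \<mu>mono: "\<mu> s \<le> \<mu> s'" if "s \<le> s'" for s s'
      unfolding \<mu>_def using that by (intro measure_mono_fmeasurable[OF _ fmeasurableD[OF \<mu>l] \<mu>l]) auto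
    have \<mu>U: "\<mu> s \<le> measure lebesgue U" for s
      unfolding \<mu>_def by (intro measure_mono_fmeasurable[OF _ fmeasurableD[OF \<mu>l] Ul]) auto
    have \<mu>0: "0 \<le> \<mu> s" for s unfolding \<mu>_def by simp
    have \<mu>inc: "\<mu> s + (s' - s) \<le> \<mu> s'" if "y \<le> s" "s < s'" "{s<..<s'} \<subseteq> U" for s s'
    proof -
      have "U \<inter> {y..s} \<union> {s<..<s'} \<subseteq> U \<inter> {y..s'}" using that by auto
      moreover have "U \<inter> {y..s} \<union> {s<..<s'} \<in> lmeasurable"
        using \<mu>l lmeasurable_interval(2) by (rule fmeasurable.Un)
      ultimately have "measure lebesgue (U \<inter> {y..s} \<union> {s<..<s'}) \<le> \<mu> s'"
        unfolding \<mu>_def by (intro measure_mono_fmeasurable[OF _ _ \<mu>l]) (auto dest: fmeasurableD)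
      moreover have "measure lebesgue (U \<inter> {y..s} \<union> {s<..<s'}) = \<mu> s + measure lebesgue ({s<..<s'} - U \<inter> {y..s})"
        unfolding \<mu>_def by (rule measure_Un2[OF \<mu>l lmeasurable_interval(2)])
      moreover have "{s<..<s'} - U \<inter> {y..s} = {s<..<s'}" by auto
      moreover have "measure lebesgue {s<..<s'} = s' - s" using that by simp
      ultimately show ?thesis by simp
    qed
    define \<Phi> where "\<Phi> s = \<psi> s + \<epsilon> * (s - y) + M * \<mu> s" for s
    have \<Phi>lip: "\<Phi> s' - \<Phi> s \<ge> -M*(s'-s)" if "y \<le> s" "s < s'" "s' \<le> x" for s s'
    proof -
      have "\<psi> s' - \<psi> s \<ge> -M*(s'-s)" by (rule lip[OF that])
      moreover have "M * \<mu> s \<le> M * \<mu> s'" using \<mu>mono[of s s'] that M by (simp add: mult_left_mono)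
      moreover have "0 \<le> \<epsilon> * (s' - s)" using that eps by simp
      ultimately show ?thesis unfolding \<Phi>_def by (simp add: algebra_simps)
    qed
    define A where "A = {s\<in>{y..x}. \<forall>r\<in>{y..s}. \<Phi> y \<le> \<Phi> r}"
    have yA: "y \<in> A" unfolding A_def using yx by auto
    have Ane: "A \<noteq> {}" using yA by auto
    have Abdd: "bdd_above A" unfolding A_def by (rule bdd_aboveI[of _ x]) auto
    define s0 where "s0 = Sup A"
    have s0y: "y \<le> s0" unfolding s0_def by (rule cSup_upper[OF yA Abdd])
    have s0x: "s0 \<le> x" unfolding s0_def by (rule cSup_least[OF Ane]) (auto simp: A_def)
    have below: "\<Phi> y \<le> \<Phi> r" if r: "y \<le> r" "r < s0" for r
    proof -
      obtain s where "s \<in> A" "r < s" using less_cSup_iff[OF Ane Abdd, of r] r unfolding s0_def by blast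
      then show ?thesis using r unfolding A_def by auto
    qed
    have at0: "\<Phi> y \<le> \<Phi> s0"
    proof (cases "s0 = y")
      case True then show ?thesis by simp
    next
      case False
      then have ys: "y < s0" using s0y by simp
      show ?thesis
      proof (rule ccontr)
        assume neg: "\<not> \<Phi> y \<le> \<Phi> s0"
        define g where "g = \<Phi> y - \<Phi> s0"
        have g: "g > 0" using neg unfolding g_def by simp
        define r where "r = max y (s0 - g/(2*(M+1)))"
        have r: "y \<le> r" "r < s0" unfolding r_def using ys g M by auto
        have "s0 - r \<le> g/(2*(M+1))" unfolding r_def by simp
        then have "M * (s0 - r) \<le> M * (g/(2*(M+1)))" using M by (rule mult_left_mono)
        also have "\<dots> < g"
        proof -
          have "0 \<le> M * g" using g M by simp
          then have "M * g < g * (2*(M+1))" using g by (simp add: algebra_simps)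
          then show ?thesis using M by (simp add: field_simps)
        qed
        finally have "M * (s0 - r) < g" .
        moreover have "\<Phi> s0 - \<Phi> r \<ge> -M*(s0-r)" using \<Phi>lip[OF r(1) r(2) s0x] .
        moreover have "\<Phi> y \<le> \<Phi> r" using below r by blast
        ultimately show False unfolding g_def by linarith
      qed
    qed
    have s0A: "s0 \<in> A" unfolding A_def
    proof (intro CollectI conjI ballI)
      show "s0 \<in> {y..x}" using s0y s0x by simp
      fix r assume "r \<in> {y..s0}"
      then show "\<Phi> y \<le> \<Phi> r" using below at0 by (cases "r = s0") auto
    qed
    have s0eq: "s0 = x"
    proof (rule ccontr)
      assume "s0 \<noteq> x"
      then have sx: "s0 < x" using s0x by simp
      have "\<exists>\<rho>>0. \<forall>s'. s0 < s' \<longrightarrow> s' < s0 + \<rho> \<longrightarrow> \<Phi> s0 \<le> \<Phi> s'"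
      proof (cases "s0 \<in> N")
        case True
        then have "s0 \<in> U" using U by auto
        then obtain \<rho> where \<rho>: "\<rho> > 0" "ball s0 \<rho> \<subseteq> U" using U(1) open_contains_ball by blast
        show ?thesis
        proof (intro exI[of _ "min \<rho> (x - s0)"] conjI allI impI)
          show "0 < min \<rho> (x - s0)" using \<rho> sx by simp
          fix s' assume s': "s0 < s'" "s' < s0 + min \<rho> (x - s0)"
          have "s' < x" using s' by (simp add: min_def split: if_splits)
          have "{s0<..<s'} \<subseteq> U" using \<rho>(2) s' by (auto simp: dist_real_def subset_iff)
          then have "\<mu> s0 + (s' - s0) \<le> \<mu> s'" using \<mu>inc s0y s' by blast
          moreover have "\<psi> s' - \<psi> s0 \<ge> -M*(s'-s0)" using lip[of s0 s'] s0y s' \<open>s' < x\<close> by simp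
          moreover have "0 \<le> \<epsilon> * (s' - s0)" using s' eps by simp
          ultimately have "M * (s' - s0) \<le> M * (\<mu> s' - \<mu> s0)" using M by (simp add: mult_left_mono)
          then show "\<Phi> s0 \<le> \<Phi> s'" unfolding \<Phi>_def
            using lip[of s0 s'] s0y s' \<open>s' < x\<close> \<open>0 \<le> \<epsilon> * (s' - s0)\<close> by (simp add: algebra_simps)
        qed
      next
        case False
        then obtain D where D: "D \<ge> 0" "(\<psi> has_real_derivative D) (at s0)" using der[of s0] s0y sx by auto
        then have "((\<lambda>z. (\<psi> z - \<psi> s0) / (z - s0)) \<longlongrightarrow> D) (at s0)"
          by (simp add: has_field_derivative_iff)
        then have "\<forall>\<^sub>F z in at s0. dist ((\<psi> z - \<psi> s0) / (z - s0)) D < \<epsilon>"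
          using eps by (rule tendstoD)
        then obtain \<rho> where \<rho>: "\<rho> > 0" "\<And>z. z \<noteq> s0 \<Longrightarrow> dist z s0 < \<rho> \<Longrightarrow> dist ((\<psi> z - \<psi> s0) / (z - s0)) D < \<epsilon>"
          unfolding eventually_at by auto
        show ?thesis
        proof (intro exI[of _ \<rho>] conjI allI impI)
          show "0 < \<rho>" by fact
          fix s' assume s': "s0 < s'" "s' < s0 + \<rho>"
          have "dist ((\<psi> s' - \<psi> s0) / (s' - s0)) D < \<epsilon>" using \<rho>(2)[of s'] s' by (auto simp: dist_real_def)
          then have "D - \<epsilon> < (\<psi> s' - \<psi> s0) / (s' - s0)" by (auto simp: dist_real_def)
          then have "(D - \<epsilon>) * (s' - s0) < \<psi> s' - \<psi> s0" using s' by (simp add: pos_less_divide_eq)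
          moreover have "0 \<le> D * (s' - s0)" using D s' by simp
          moreover have "M * \<mu> s0 \<le> M * \<mu> s'" using \<mu>mono[of s0 s'] s' M by (simp add: mult_left_mono)
          ultimately show "\<Phi> s0 \<le> \<Phi> s'" unfolding \<Phi>_def by (simp add: algebra_simps)
        qed
      qed
      then obtain \<rho> where \<rho>: "\<rho> > 0" "\<And>s'. s0 < s' \<Longrightarrow> s' < s0 + \<rho> \<Longrightarrow> \<Phi> s0 \<le> \<Phi> s'" by blast
      define s1 where "s1 = min x (s0 + \<rho>/2)"
      have s1: "s0 < s1" "s1 \<le> x" "s1 < s0 + \<rho>" unfolding s1_def using sx \<rho> by auto
      have "s1 \<in> A" unfolding A_def
      proof (intro CollectI conjI ballI)
        show "s1 \<in> {y..x}" using s1 s0y by simp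
        fix r assume r: "r \<in> {y..s1}"
        show "\<Phi> y \<le> \<Phi> r"
        proof (cases "r \<le> s0")
          case True then show ?thesis using s0A r unfolding A_def by auto
        next
          case False
          then have "\<Phi> s0 \<le> \<Phi> r" using \<rho>(2)[of r] r s1 by auto
          then show ?thesis using at0 by linarith
        qed
      qed
      then have "s1 \<le> s0" unfolding s0_def by (rule cSup_upper[OF _ Abdd])
      then show False using s1 by simp
    qed
    have "\<Phi> y \<le> \<Phi> x" using s0A s0eq unfolding A_def by auto
    moreover have "\<psi> y \<le> \<Phi> y" unfolding \<Phi>_def using \<mu>0 M by simp
    moreover have "\<Phi> x \<le> \<psi> x + \<epsilon> * (x - y) + M * \<epsilon>"
    proof -
      have "M * \<mu> x \<le> M * \<epsilon>" using \<mu>U[of x] mU M by (intro mult_left_mono) auto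
      then show ?thesis unfolding \<Phi>_def by simp
    qed
    ultimately show ?thesis by linarith
  qed
  show ?thesis
  proof (rule field_le_epsilon)
    fix e :: real assume e: "e > 0"
    define \<epsilon> where "\<epsilon> = e / (x - y + M + 1)"
    have den: "x - y + M + 1 > 0" using yx M by simp
    have eps: "\<epsilon> > 0" unfolding \<epsilon>_def using e den by simp
    have "\<epsilon> * (x - y) + M * \<epsilon> \<le> e"
    proof -
      have "\<epsilon> * (x - y) + M * \<epsilon> = \<epsilon> * (x - y + M)" by (simp add: algebra_simps)
      also have "\<dots> \<le> \<epsilon> * (x - y + M + 1)" using eps by simp
      also have "\<dots> = e" unfolding \<epsilon>_def using den by simp
      finally show ?thesis .
    qed
    then show "\<psi> y \<le> \<psi> x + e" using main[OF eps] by linarith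
  qed
qed

lemma deriv_nonneg_mono_on:
  fixes h :: "real \<Rightarrow> real"
  assumes mh: "mono_on {a..<b} h" and s: "a \<le> s" "s < b" and D: "(h has_real_derivative D) (at s)"
  shows "0 \<le> D"
proof -
  have "((\<lambda>z. (h z - h s) / (z - s)) \<longlongrightarrow> D) (at s)" using D by (simp add: has_field_derivative_iff)
  then have lim: "((\<lambda>z. (h z - h s) / (z - s)) \<longlongrightarrow> D) (at_right s)"
    by (rule tendsto_within_subset) auto
  show ?thesis
  proof (rule tendsto_lowerbound[OF lim])
    show "\<forall>\<^sub>F z in at_right s. 0 \<le> (h z - h s) / (z - s)"
    proof (rule eventually_at_rightI[of s b])
      fix z assume z: "z \<in> {s<..<b}"
      then have "h s \<le> h z" using s by (intro mono_onD[OF mh]) auto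
      then show "0 \<le> (h z - h s) / (z - s)" using z by simp
    qed fact
  qed simp
qed

lemma main_t:
  fixes h :: "real \<Rightarrow> real" and a b t q :: real
  assumes ab: "a < b" and mh: "mono_on {a..<b} h" and t: "t > 0" and q: "0 < q" "q < 1"
    and ad: "a < \<delta>" "\<delta> < b" and AEt: "AE x in lborel. x \<in> {a..\<delta>} \<longrightarrow> growth_quot h a x \<le> ereal t"
  shows "Limsup (at_right a) (\<lambda>x. ereal ((h (a + q * (x - a)) - h a) / (h x - h a))) \<le> ereal (q powr (1/t))"
proof (rule Limsup_bounded, rule eventually_at_rightI[OF _ ad(1)])
  have "AE x in lebesgue. x \<in> {a..\<delta>} \<longrightarrow> growth_quot h a x \<le> ereal t" using AEt by (rule AE_completion)
  then obtain N0 where N0: "negligible N0" "{x. \<not> (x \<in> {a..\<delta>} \<longrightarrow> growth_quot h a x \<le> ereal t)} \<subseteq> N0"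
    unfolding eventually_ae_filter_negligible by blast
  define Nd where "Nd = {x\<in>{a<..<b}. \<not> (\<exists>D. (h has_real_derivative D) (at x))}"
  have Nd: "negligible Nd" unfolding Nd_def by (rule mono_on_ae_diff[OF mh ab])
  define N where "N = N0 \<union> Nd"
  have Nn: "negligible N" unfolding N_def using N0(1) Nd by (rule negligible_Un)
  fix x assume x: "x \<in> {a<..<\<delta>}"
  define y where "y = a + q * (x - a)"
  have "q * (x - a) < 1 * (x - a)" using x q by (intro mult_strict_right_mono) auto
  then have "q * (x - a) < x - a" by simp
  moreover have "0 < q * (x - a)" using x q by simp
  ultimately have y: "a < y" "y < x" unfolding y_def by linarith+
  have hmono: "h u \<le> h v" if "a \<le> u" "u \<le> v" "v < b" for u v using that by (intro mono_onD[OF mh]) auto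
  have hay: "h a \<le> h y" using hmono[of a y] y x ad by auto
  have hyx: "h y \<le> h x" using hmono[of y x] y x ad by auto
  have qpos: "0 \<le> q powr (1/t)" by simp
  show "ereal ((h (a + q * (x - a)) - h a) / (h x - h a)) \<le> ereal (q powr (1/t))"
  proof (cases "h y = h a")
    case True
    then show ?thesis unfolding y_def[symmetric] using qpos by simp
  next
    case False
    then have hya: "h a < h y" using hay by simp
    then have hxa: "h a < h x" using hyx by simp
    define \<psi> where "\<psi> s = ln (h s - h a) - ln (s - a) / t" for s
    have "\<psi> y \<le> \<psi> x"
    proof (rule RI[OF y(2), of "1/(t*(y-a))" _ N])
      show "0 \<le> 1/(t*(y-a))" using t y by simp
      show "negligible N" by fact
      fix s s' assume ss: "y \<le> s" "s < s'" "s' \<le> x"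
      have hs: "h a < h s" "h s \<le> h s'" using hmono[of y s] hmono[of s s'] hya ss y x ad by auto
      have l1: "ln (h s - h a) \<le> ln (h s' - h a)" using hs by simp
      have l2: "ln (s' - a) - ln (s - a) \<le> (s' - s)/(s - a)"
      proof -
        have "ln (s' - a) - ln (s - a) = ln ((s'-a)/(s-a))" using ss y by (simp add: ln_div)
        also have "\<dots> \<le> (s'-a)/(s-a) - 1" using ss y by (intro ln_le_minus_one) simp
        also have "\<dots> = (s' - s)/(s - a)" using ss y by (simp add: field_simps)
        finally show ?thesis .
      qed
      have l3: "(s' - s)/(s - a) \<le> (s' - s)/(y - a)" using ss y by (intro divide_left_mono) auto
      have "(ln (s' - a) - ln (s - a)) / t \<le> ((s' - s)/(y - a)) / t" using l2 l3 t by (intro divide_right_mono) auto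
      also have "\<dots> = 1/(t*(y-a)) * (s' - s)" by simp
      finally have "ln (s' - a)/t - ln (s - a)/t \<le> 1/(t*(y-a)) * (s' - s)" by (simp add: diff_divide_distrib)
      then show "- (1/(t*(y-a))) * (s' - s) \<le> \<psi> s' - \<psi> s" unfolding \<psi>_def using l1 by linarith
    next
      fix s assume s: "s \<in> {y..<x}" "s \<notin> N"
      have sab: "s \<in> {a<..<b}" using s y x ad by auto
      then obtain D where D: "(h has_real_derivative D) (at s)" using s unfolding N_def Nd_def by blast
      have "s \<in> {a..\<delta>}" "s \<notin> N0" using s x y unfolding N_def by auto
      then have gq: "growth_quot h a s \<le> ereal t" using N0(2) by blast
      have hs: "h a < h s" using hmono[of y s] hya s y sab by auto
      have D0: "0 \<le> D" using deriv_nonneg_mono_on[OF mh _ _ D] sab by auto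
      have dD: "deriv h s = D" using D by (rule DERIV_imp_deriv)
      have "D \<noteq> 0" using gq hs unfolding growth_quot_def dD by auto
      then have Dp: "D > 0" using D0 by simp
      have "(h s - h a) / ((s - a) * D) \<le> t" using gq hs Dp unfolding growth_quot_def dD by auto
      then have key: "h s - h a \<le> t * ((s - a) * D)" using Dp sab by (simp add: pos_divide_le_eq)
      have g1: "((\<lambda>z. h z - h a) has_real_derivative D) (at s)" using D by (auto intro!: derivative_eq_intros)
      have d1: "((\<lambda>z. ln (h z - h a)) has_real_derivative (1/(h s - h a)) * D) (at s)"
        by (rule DERIV_chain2[OF DERIV_ln_divide g1]) (use hs in simp)
      have g2: "((\<lambda>z. z - a) has_real_derivative 1) (at s)" by (auto intro!: derivative_eq_intros)
      have d2: "((\<lambda>z. ln (z - a)) has_real_derivative (1/(s - a)) * 1) (at s)"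
        by (rule DERIV_chain2[OF DERIV_ln_divide g2]) (use sab in simp)
      have d3: "((\<lambda>z. ln (z - a) / t) has_real_derivative ((1/(s - a)) * 1) / t) (at s)"
        by (rule DERIV_cdivide[OF d2])
      have "(\<psi> has_real_derivative ((1/(h s - h a)) * D - ((1/(s - a)) * 1) / t)) (at s)"
        unfolding \<psi>_def by (rule DERIV_diff[OF d1 d3])
      moreover have "0 \<le> (1/(h s - h a)) * D - ((1/(s - a)) * 1) / t"
      proof -
        have "((1/(s - a)) * 1) / t = 1 / (t * (s - a))" by simp
        also have "\<dots> \<le> D / (h s - h a)" using key hs sab t Dp by (simp add: divide_simps mult.commute mult.left_commute)
        finally show ?thesis by simp
      qed
      ultimately show "\<exists>D\<ge>0. (\<psi> has_real_derivative D) (at s)" by blast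
    qed
    then have "ln (h y - h a) - ln (y - a) / t \<le> ln (h x - h a) - ln (x - a) / t" unfolding \<psi>_def .
    moreover have "ln (y - a) = ln q + ln (x - a)" unfolding y_def using q x by (simp add: ln_mult)
    ultimately have "ln (h y - h a) \<le> ln (h x - h a) + ln q / t" by (simp add: add_divide_distrib)
    then have "exp (ln (h y - h a)) \<le> exp (ln (h x - h a) + ln q / t)" by simp
    then have "h y - h a \<le> (h x - h a) * exp (1/t * ln q)" using hya hxa by (simp add: exp_add)
    also have "exp (1/t * ln q) = q powr (1/t)" using q by (simp add: powr_def)
    finally have "(h y - h a) / (h x - h a) \<le> q powr (1/t)" using hxa by (simp add: pos_divide_le_eq mult.commute)
    then show ?thesis unfolding y_def[symmetric] by simp
  qed
qed

theorem lemma1: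
  fixes a b :: real and h :: "real \<Rightarrow> real"
  assumes "a < b"
    and "mono_on {a..<b} h"
    and "ess_limsup_at_right a b (growth_quot h a) < \<infinity>"
  shows "\<forall>q \<in> {0<..<1}.
           Limsup (at_right a) (\<lambda>x. ereal ((h (a + q * (x - a)) - h a) / (h x - h a)))
             \<le> pow_inv q (ess_limsup_at_right a b (growth_quot h a))"
proof
  fix q :: real assume qq: "q \<in> {0<..<1}"
  then have q: "0 < q" "q < 1" by auto
  define St where "St = {t. \<exists>\<delta>. a < \<delta> \<and> \<delta> < b \<and> (AE x in lborel. x \<in> {a..\<delta>} \<longrightarrow> growth_quot h a x \<le> ereal t)}"
  define C where "C = ess_limsup_at_right a b (growth_quot h a)"
  have Ceq: "C = Inf (ereal ` St)" unfolding C_def ess_limsup_at_right_def St_def by simp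
  define L where "L = Limsup (at_right a) (\<lambda>x. ereal ((h (a + q * (x - a)) - h a) / (h x - h a)))"
  have up: "t' \<in> St" if tS: "t \<in> St" and tt: "t \<le> t'" for t t'
  proof -
    obtain \<delta> where d: "a < \<delta>" "\<delta> < b" "AE x in lborel. x \<in> {a..\<delta>} \<longrightarrow> growth_quot h a x \<le> ereal t"
      using tS unfolding St_def by blast
    have "AE x in lborel. x \<in> {a..\<delta>} \<longrightarrow> growth_quot h a x \<le> ereal t'"
      using d(3) by eventually_elim (use tt in \<open>auto intro: order_trans\<close>)
    then show ?thesis unfolding St_def using d(1,2) by blast
  qed
  have ltC: "t \<in> St" if Ct: "C < ereal t" for t
  proof -
    have "\<exists>s\<in>ereal ` St. s < ereal t" using Ct unfolding Ceq by (simp only: Inf_less_iff)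
    then obtain s where "s \<in> ereal ` St" "s < ereal t" by blast
    then obtain t0 where "t0 \<in> St" "t0 < t" by auto
    then show ?thesis using up by auto
  qed
  have mainL: "L \<le> ereal (q powr (1/t))" if tp: "t > 0" and tS: "t \<in> St" for t
  proof -
    obtain \<delta> where d: "a < \<delta>" "\<delta> < b" "AE x in lborel. x \<in> {a..\<delta>} \<longrightarrow> growth_quot h a x \<le> ereal t"
      using tS unfolding St_def by blast
    show ?thesis unfolding L_def by (rule main_t[OF assms(1,2) tp q d])
  qed
  have small: "L \<le> 0" if all: "\<And>t. t > 0 \<Longrightarrow> t \<in> St"
  proof (rule ereal_le_epsilon2)
    fix e :: real assume e: "e > 0"
    show "L \<le> 0 + ereal e"
    proof (cases "e < 1")
      case True
      define t where "t = ln q / ln e"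
      have lq: "ln q < 0" using q by simp
      have le: "ln e < 0" using e True by simp
      have t: "t > 0" unfolding t_def using lq le by (simp add: divide_neg_neg)
      have "q powr (1/t) = exp (1/t * ln q)" using q by (simp add: powr_def)
      also have "1/t * ln q = ln e" unfolding t_def using lq le by simp
      finally have "q powr (1/t) = e" using e by simp
      then show ?thesis using mainL[OF t all[OF t]] by simp
    next
      case False
      have "q powr (1/1) \<le> 1" using q by simp
      then have "L \<le> ereal 1" using mainL[of 1] all[of 1] by (meson dual_order.trans ereal_less_eq(3) zero_less_one)
      then show ?thesis using False by (simp add: order_trans)
    qed
  qed
  show "Limsup (at_right a) (\<lambda>x. ereal ((h (a + q * (x - a)) - h a) / (h x - h a))) \<le> pow_inv q (ess_limsup_at_right a b (growth_quot h a))"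
    unfolding L_def[symmetric] C_def[symmetric]
  proof (cases C)
    case (real c)
    show "L \<le> pow_inv q C"
    proof (cases "c > 0")
      case True
      have pi: "pow_inv q C = ereal (q powr (1/c))" unfolding pow_inv_def using real True by simp
      have lim: "((\<lambda>t. ereal (q powr (1/t))) \<longlongrightarrow> ereal (q powr (1/c))) (at_right c)"
        using True q by (intro tendsto_intros) auto
      have ev: "\<forall>\<^sub>F t in at_right c. L \<le> ereal (q powr (1/t))"
      proof (rule eventually_at_rightI[of c "c+1"])
        fix t assume t: "t \<in> {c<..<c+1}"
        then have "C < ereal t" using real by simp
        then show "L \<le> ereal (q powr (1/t))" using mainL ltC t True by simp
      qed simp
      have "L \<le> ereal (q powr (1/c))"
        by (rule tendsto_le[OF _ lim tendsto_const ev]) simp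
      then show ?thesis using pi by simp
    next
      case False
      have "L \<le> 0" by (rule small) (use real False ltC in auto)
      moreover have "0 \<le> pow_inv q C" unfolding pow_inv_def by simp
      ultimately show ?thesis by (rule order_trans)
    qed
  next
    case PInf
    then show "L \<le> pow_inv q C" using assms(3) unfolding C_def by simp
  next
    case MInf
    have "L \<le> 0" by (rule small) (use MInf ltC in auto)
    moreover have "0 \<le> pow_inv q C" unfolding pow_inv_def by simp
    ultimately show "L \<le> pow_inv q C" by (rule order_trans)
  qed
qed

end
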